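(* Let $M=\{D_1,\dots,D_m\}$, $m\ge3$, be a 2-disk system of pairwise distinct disks whose Vietoris–Rips scale satisfies $\nu_M>0$. Then for all $i\ne j$ and $k\notin\{i,j\}$ the map $\Lambda^k_{i,j}:[\nu_M,\infty)\to\mathbb R$, $\lambda\mapsto\lambda r_k-\|d_{ij}(\lambda)-c_k\|$, is continuous, and consequently $\rho_M:[\nu_M,\infty)\to\mathbb R$ is continuous.
   Context: A 2-disk system is a finite collection of closed disks $D_i=D(c_i;r_i)\subset\mathbb R^2$ with $r_i>0$; $\partial D$ is the boundary circle. $\nu_M=\max_{i<j}\|c_i-c_j\|/(r_i+r_j)$ is the Vietoris–Rips scale, so for $\lambda\ge\nu_M$ the disks $D(c_i;\lambda r_i)$ pairwise intersect. Definition of $d_{ij}$ for two intersecting disks $D_i,D_j$ ($i\ne j$): write $c_j-c_i=(a,b)$, $\mathbf n_{ij}=(-b,a)$. (1) If $\partial D_i\cap\partial D_j\ne\emptyset$, $d_{ij}$ is the unique point of $\partial D_i\cap\partial D_j$ with $\langle d_{ij}-c_i,\mathbf n_{ij}\rangle\ge0$. (2) If $\partial D_i\cap\partial D_j=\emptyset$, let $\lambda_0=\|c_i-c_j\|/|r_i-r_j|$ and $d_{ij}$ is the unique point of $\partial D(c_i;\lambda_0 r_i)\cap\partial D(c_j;\lambda_0 r_j)$ (equal to $c_i$ if $c_i=c_j$). $d_{ij}(\lambda)$ denotes this point for the rescaled disks $D(c_i;\lambda r_i),D(c_j;\lambda r_j)$. For a 2-disk system $M$ with $m\ge3$ pairwise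 intersecting disks, $\rho(M)=\max_{i\ne j}\min_{k\notin\{i,j\}}\big(r_k-\|d_{ij}-c_k\|\big)$, and $\rho_M(\lambda)=\rho(M_\lambda)=\max_{i\neq j}\min_{k\notin\{i,j\}}\Lambda^k_{i,j}(\lambda)$ for $\lambda\ge\nu_M$, where $M_\lambda=\{D(c_i;\lambda r_i)\}$. *)

theory Defs
  imports "HOL-Analysis.Analysis"
begin

text \<open>The plane R^2 is modelled as the complex numbers; a point (a,b) is a + i b.
  A 2-disk system with m disks is given by centres c :: nat => complex and radii
  r :: nat => real, indexed by {..<m}; the disk D_i is cball (c i) (r i), its
  boundary circle is sphere (c i) (r i).\<close>

definition vr_scale :: "nat \<Rightarrow> (nat \<Rightarrow> complex) \<Rightarrow> (nat \<Rightarrow> real) \<Rightarrow> real" where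
  "vr_scale m c r = Max {cmod (c i - c j) / (r i + r j) | i j. i < j \<and> j < m}"

text \<open>The point d_ij for two intersecting disks D(ci;ri), D(cj;rj).
  The normal vector n_ij = (-b,a) for cj - ci = (a,b) is i * (cj - ci).\<close>
definition dpt :: "complex \<Rightarrow> real \<Rightarrow> complex \<Rightarrow> real \<Rightarrow> complex" where
  "dpt ci ri cj rj =
     (if sphere ci ri \<inter> sphere cj rj \<noteq> {}
      then (THE d. d \<in> sphere ci ri \<inter> sphere cj rj \<and> (d - ci) \<bullet> (\<i> * (cj - ci)) \<ge> 0)
      else (let l0 = cmod (ci - cj) / \<bar>ri - rj\<bar>
            in THE d. d \<in> sphere ci (l0 * ri) \<inter> sphere cj (l0 * rj)))"

definition dpt_scaled :: "(nat \<Rightarrow> complex) \<Rightarrow> (nat \<Rightarrow> real) \<Rightarrow> nat \<Rightarrow> nat \<Rightarrow> real \<Rightarrow> complex" where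
  "dpt_scaled c r i j lam = dpt (c i) (lam * r i) (c j) (lam * r j)"

definition Lam :: "(nat \<Rightarrow> complex) \<Rightarrow> (nat \<Rightarrow> real) \<Rightarrow> nat \<Rightarrow> nat \<Rightarrow> nat \<Rightarrow> real \<Rightarrow> real" where
  "Lam c r k i j lam = lam * r k - cmod (dpt_scaled c r i j lam - c k)"

definition rho_fun :: "nat \<Rightarrow> (nat \<Rightarrow> complex) \<Rightarrow> (nat \<Rightarrow> real) \<Rightarrow> real \<Rightarrow> real" where
  "rho_fun m c r lam =
     Max {Min {Lam c r k i j lam | k. k < m \<and> k \<noteq> i \<and> k \<noteq> j} | i j. i < m \<and> j < m \<and> i \<noteq> j}"

end

theory Submission imports Defs begin

lemma key_id: fixes A B :: real
  shows "4*(A^2 - ((A^2-B^2+1)/2)^2) = ((A+B)^2-1)*(1-(A-B)^2)"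
proof -
  have "4*(A^2 - ((A^2-B^2+1)/2)^2) = 4*A^2 - (A^2-B^2+1)^2"
    by (simp add: power_divide algebra_simps)
  also have "\<dots> = ((A+B)^2-1)*(1-(A-B)^2)" by algebra
  finally show ?thesis .
qed

lemma unit_pt: fixes z::complex
  assumes "cmod z = A" "cmod (z - 1) = B"
  shows "Re z = (A^2-B^2+1)/2" "(Im z)^2 = A^2 - ((A^2-B^2+1)/2)^2"
proof -
  have 1: "A^2 = (Re z)^2 + (Im z)^2" using assms(1) cmod_power2 by metis
  have 2: "B^2 = (Re z - 1)^2 + (Im z)^2" using assms(2) cmod_power2[of "z-1"] by simp
  show r: "Re z = (A^2-B^2+1)/2" using 1 2 by (simp add: power2_eq_square algebra_simps)
  have "(Im z)^2 = A^2 - (Re z)^2" using 1 by linarith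
  then show "(Im z)^2 = A^2 - ((A^2-B^2+1)/2)^2" using r by simp
qed

lemma inner_mult: fixes w z :: complex
  shows "(w*z) \<bullet> (\<i>*w) = (cmod w)^2 * Im z"
proof -
  have "(cmod w)^2 = (Re w)^2 + (Im w)^2" by (rule cmod_power2)
  then show ?thesis by (simp add: inner_complex_def algebra_simps power2_eq_square)
qed


definition gX :: "real \<Rightarrow> real \<Rightarrow> real" where "gX A B = (A^2-B^2+1)/2"

definition gz :: "real \<Rightarrow> real \<Rightarrow> complex" where
  "gz A B = complex_of_real (gX A B) + \<i> * complex_of_real (sqrt (A^2 - (gX A B)^2))"

definition gpt :: "complex \<Rightarrow> real \<Rightarrow> complex \<Rightarrow> real \<Rightarrow> complex" where
  "gpt ci a cj b = ci + (cj - ci) * gz (a / cmod (cj - ci)) (b / cmod (cj - ci))"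

lemma gz_props:
  assumes "A \<ge> 0" "B \<ge> 0" "\<bar>A - B\<bar> \<le> 1" "1 \<le> A + B"
  shows "cmod (gz A B) = A" "cmod (gz A B - 1) = B" "Im (gz A B) \<ge> 0"
proof -
  define X where "X = gX A B"
  have nn: "A^2 - X^2 \<ge> 0"
  proof -
    have "(A+B)^2 \<ge> 1" using assms(4) by (metis abs_of_nonneg one_le_power assms(1,2) add_nonneg_nonneg le_numeral_extra(1) order_trans)
    moreover have "(A-B)^2 \<le> 1" using assms(3) by (metis abs_le_square_iff abs_one one_power2)
    ultimately have "((A+B)^2-1)*(1-(A-B)^2) \<ge> 0" by simp
    then have "0 \<le> 4*(A^2 - ((A^2-B^2+1)/2)^2)" by (subst key_id)
    then show ?thesis unfolding X_def gX_def by simp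
  qed
  have re: "Re (gz A B) = X" and im: "Im (gz A B) = sqrt (A^2 - X^2)"
    by (simp_all add: gz_def X_def)
  show "Im (gz A B) \<ge> 0" using im nn by simp
  have "(cmod (gz A B))^2 = A^2"
    using re im nn by (simp add: cmod_power2)
  then show "cmod (gz A B) = A" using assms(1) by (simp add: power2_eq_iff_nonneg)
  have "(cmod (gz A B - 1))^2 = (X - 1)^2 + (A^2 - X^2)"
    using re im nn by (simp add: cmod_power2)
  also have "\<dots> = B^2" by (simp add: X_def gX_def power2_eq_square algebra_simps)
  finally show "cmod (gz A B - 1) = B" using assms(2) by (simp add: power2_eq_iff_nonneg)
qed

lemma gz_uniq:
  assumes "cmod z = A" "cmod (z - 1) = B" "Im z \<ge> 0"
  shows "z = gz A B"
proof -
  note u = unit_pt[OF assms(1,2)]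
  have "Im z = sqrt ((Im z)^2)" using assms(3) by simp
  then have "Im z = sqrt (A^2 - (gX A B)^2)" using u(2) by (simp add: gX_def)
  then show ?thesis using u(1) by (simp add: gz_def gX_def complex_eq_iff)
qed

lemma gz_tang:
  assumes "cmod z = A" "cmod (z - 1) = B" "\<bar>A - B\<bar> = 1"
  shows "z = gz A B"
proof -
  note u = unit_pt[OF assms(1,2)]
  have "(A-B)^2 = 1" using assms(3) by (metis abs_one power2_abs one_power2)
  then have "A^2 - (gX A B)^2 = 0" using key_id[of A B] by (simp add: gX_def)
  then have "Im z = 0" using u(2) by (simp add: gX_def)
  then show ?thesis using u(1) \<open>A^2 - (gX A B)^2 = 0\<close> by (simp add: gz_def gX_def complex_eq_iff)
qed


lemma gpt_sph:
  assumes "ci \<noteq> cj" "a \<ge> 0" "b \<ge> 0" "\<bar>a - b\<bar> \<le> cmod (cj - ci)" "cmod (cj - ci) \<le> a + b"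
  shows "dist ci (gpt ci a cj b) = a" "dist cj (gpt ci a cj b) = b"
    "(gpt ci a cj b - ci) \<bullet> (\<i> * (cj - ci)) \<ge> 0"
proof -
  define w where "w = cj - ci"
  define D where "D = cmod w"
  have D: "D > 0" using assms(1) by (simp add: D_def w_def)
  have A: "a/D \<ge> 0" "b/D \<ge> 0" using assms D by auto
  have "\<bar>a/D - b/D\<bar> = \<bar>a - b\<bar>/D" using D by (simp add: diff_divide_distrib[symmetric])
  also have "\<dots> \<le> 1" using assms(4) D by (simp add: D_def w_def)
  finally have B: "\<bar>a/D - b/D\<bar> \<le> 1" .
  have C: "1 \<le> a/D + b/D" using assms(5) D by (simp add: D_def w_def add_divide_distrib[symmetric])
  note g = gz_props[OF A B C]
  have e: "gpt ci a cj b = ci + w * gz (a/D) (b/D)" by (simp add: gpt_def w_def D_def)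
  show "dist ci (gpt ci a cj b) = a" using g(1) D
    by (simp add: e dist_norm norm_mult D_def norm_minus_commute)
  have "gpt ci a cj b - cj = w * (gz (a/D) (b/D) - 1)" by (simp add: e w_def algebra_simps)
  then have "dist cj (gpt ci a cj b) = D * cmod (gz (a/D) (b/D) - 1)"
    by (metis dist_commute dist_norm norm_mult D_def)
  then show "dist cj (gpt ci a cj b) = b" using g(2) D by simp
  show "(gpt ci a cj b - ci) \<bullet> (\<i> * (cj - ci)) \<ge> 0"
    using g(3) by (simp add: e inner_mult flip: w_def)
qed

lemma sph_z:
  assumes "ci \<noteq> cj" "dist ci p = a" "dist cj p = b"
  defines "z \<equiv> (p - ci) / (cj - ci)"
  shows "cmod z = a / cmod (cj - ci)" "cmod (z - 1) = b / cmod (cj - ci)"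
    "p = ci + (cj - ci) * z" "(p - ci) \<bullet> (\<i> * (cj - ci)) \<ge> 0 \<longleftrightarrow> Im z \<ge> 0"
proof -
  have w: "cj - ci \<noteq> 0" using assms(1) by simp
  show p: "p = ci + (cj - ci) * z" using w by (simp add: z_def)
  show "cmod z = a / cmod (cj - ci)" using assms(2) by (simp add: z_def norm_divide dist_norm norm_minus_commute)
  have "z - 1 = (p - cj) / (cj - ci)" using w by (simp add: z_def field_simps)
  then show "cmod (z - 1) = b / cmod (cj - ci)" using assms(3) by (simp add: norm_divide dist_norm norm_minus_commute)
  have "(p - ci) \<bullet> (\<i> * (cj - ci)) = (cmod (cj - ci))^2 * Im z"
    using inner_mult[of "cj - ci" z] p by simp
  then show "(p - ci) \<bullet> (\<i> * (cj - ci)) \<ge> 0 \<longleftrightarrow> Im z \<ge> 0" using w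
    by (simp add: zero_le_mult_iff)
qed

lemma dpt_int:
  assumes "ci \<noteq> cj" "a \<ge> 0" "b \<ge> 0" "\<bar>a - b\<bar> \<le> cmod (cj - ci)" "cmod (cj - ci) \<le> a + b"
  shows "dpt ci a cj b = gpt ci a cj b"
proof -
  note g = gpt_sph[OF assms]
  have ne: "sphere ci a \<inter> sphere cj b \<noteq> {}" using g(1,2) by auto
  have "(THE d. d \<in> sphere ci a \<inter> sphere cj b \<and> (d - ci) \<bullet> (\<i> * (cj - ci)) \<ge> 0) = gpt ci a cj b"
  proof (rule the_equality)
    show "gpt ci a cj b \<in> sphere ci a \<inter> sphere cj b \<and> (gpt ci a cj b - ci) \<bullet> (\<i> * (cj - ci)) \<ge> 0"
      using g by auto
  next
    fix p assume p: "p \<in> sphere ci a \<inter> sphere cj b \<and> (p - ci) \<bullet> (\<i> * (cj - ci)) \<ge> 0"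
    then have d: "dist ci p = a" "dist cj p = b" by auto
    note s = sph_z[OF assms(1) d]
    have "(p - ci) / (cj - ci) = gz (a / cmod (cj - ci)) (b / cmod (cj - ci))"
      using gz_uniq[OF s(1,2)] s(4) p by blast
    then show "p = gpt ci a cj b" using s(3) by (simp add: gpt_def)
  qed
  then show ?thesis using ne by (simp add: dpt_def)
qed

lemma dpt_nest:
  assumes "ci \<noteq> cj" "a > 0" "b > 0" "\<bar>a - b\<bar> > cmod (cj - ci)"
  shows "dpt ci a cj b = gpt ci (cmod (cj - ci) * a / \<bar>a - b\<bar>) cj (cmod (cj - ci) * b / \<bar>a - b\<bar>)"
proof -
  define D where "D = cmod (cj - ci)"
  have D: "D > 0" using assms(1) by (simp add: D_def)
  have ab: "\<bar>a - b\<bar> > 0" using assms(4) D D_def by linarith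
  have e: "sphere ci a \<inter> sphere cj b = {}"
  proof (rule ccontr)
    assume "sphere ci a \<inter> sphere cj b \<noteq> {}"
    then obtain p where "p \<in> sphere ci a" "p \<in> sphere cj b" by blast
    then have pp: "dist ci p = a" "dist cj p = b" by auto
    have "dist ci p \<le> dist ci cj + dist cj p" by (rule dist_triangle)
    moreover have "dist cj p \<le> dist ci cj + dist ci p" by (metis dist_commute dist_triangle)
    ultimately have "\<bar>a - b\<bar> \<le> dist ci cj" using pp by linarith
    then show False using assms(4) by (simp add: dist_norm norm_minus_commute)
  qed
  define a' where "a' = D * a / \<bar>a - b\<bar>"
  define b' where "b' = D * b / \<bar>a - b\<bar>"
  have l0: "cmod (ci - cj) / \<bar>a - b\<bar> * a = a'" "cmod (ci - cj) / \<bar>a - b\<bar> * b = b'"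
    by (simp_all add: a'_def b'_def D_def norm_minus_commute)
  have a'b': "\<bar>a' - b'\<bar> = D"
  proof -
    have "a' - b' = D * (a - b) / \<bar>a - b\<bar>" by (simp add: a'_def b'_def diff_divide_distrib right_diff_distrib)
    then have "\<bar>a' - b'\<bar> = D * \<bar>a - b\<bar> / \<bar>a - b\<bar>" using D by (simp add: abs_mult)
    then show ?thesis using ab by simp
  qed
  have pos: "a' \<ge> 0" "b' \<ge> 0" using D assms ab by (auto simp: a'_def b'_def)
  have le: "D \<le> a' + b'" using a'b' pos by linarith
  note g = gpt_sph[OF assms(1) pos, unfolded D_def[symmetric], OF _ le, unfolded a'b']
  have "(THE d. d \<in> sphere ci a' \<inter> sphere cj b') = gpt ci a' cj b'"
  proof (rule the_equality)
    show "gpt ci a' cj b' \<in> sphere ci a' \<inter> sphere cj b'" using g by auto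
  next
    fix p assume p: "p \<in> sphere ci a' \<inter> sphere cj b'"
    then have d: "dist ci p = a'" "dist cj p = b'" by auto
    note s = sph_z[OF assms(1) d]
    have "\<bar>a'/D - b'/D\<bar> = \<bar>a' - b'\<bar>/D" using D by (simp add: diff_divide_distrib[symmetric])
    then have t: "\<bar>a'/D - b'/D\<bar> = 1" using a'b' D by simp
    have "(p - ci) / (cj - ci) = gz (a' / D) (b' / D)"
      using gz_tang[OF s(1,2)[unfolded D_def[symmetric]] t] .
    then show "p = gpt ci a' cj b'" using s(3) by (simp add: gpt_def D_def)
  qed
  moreover have "cmod (ci - cj) = cmod (cj - ci)" by (rule norm_minus_commute)
  ultimately show ?thesis using e by (simp add: dpt_def a'_def b'_def D_def Let_def)
qed


lemma cont_Max:
  fixes f :: "'i \<Rightarrow> 'x::topological_space \<Rightarrow> real"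
  assumes "finite A" "A \<noteq> {}" "\<And>a. a \<in> A \<Longrightarrow> continuous_on S (f a)"
  shows "continuous_on S (\<lambda>x. Max ((\<lambda>a. f a x) ` A))"
  using assms
proof (induction A rule: finite_ne_induct)
  case (singleton a) then show ?case by simp
next
  case (insert a F)
  have c1: "continuous_on S (\<lambda>x. Max ((\<lambda>a. f a x) ` F))" using insert by auto
  have "continuous_on S (\<lambda>x. max (f a x) (Max ((\<lambda>a. f a x) ` F)))"
  proof -
    have c0: "continuous_on S (f a)" using insert.prems by auto
    show ?thesis using continuous_on_max[OF c0 c1] .
  qed
  moreover have "\<And>x. Max ((\<lambda>a. f a x) ` insert a F) = max (f a x) (Max ((\<lambda>a. f a x) ` F))"
    using insert by simp
  ultimately show ?case by simp
qed

lemma cont_Min: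
  fixes f :: "'i \<Rightarrow> 'x::topological_space \<Rightarrow> real"
  assumes "finite A" "A \<noteq> {}" "\<And>a. a \<in> A \<Longrightarrow> continuous_on S (f a)"
  shows "continuous_on S (\<lambda>x. Min ((\<lambda>a. f a x) ` A))"
  using assms
proof (induction A rule: finite_ne_induct)
  case (singleton a) then show ?case by simp
next
  case (insert a F)
  have c1: "continuous_on S (\<lambda>x. Min ((\<lambda>a. f a x) ` F))" using insert by auto
  have "continuous_on S (\<lambda>x. min (f a x) (Min ((\<lambda>a. f a x) ` F)))"
  proof -
    have c0: "continuous_on S (f a)" using insert.prems by auto
    show ?thesis using continuous_on_min[OF c0 c1] .
  qed
  moreover have "\<And>x. Min ((\<lambda>a. f a x) ` insert a F) = min (f a x) (Min ((\<lambda>a. f a x) ` F))"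
    using insert by simp
  ultimately show ?case by simp
qed

lemma gpt_cont:
  assumes "continuous_on S fa" "continuous_on S fb" "ci \<noteq> cj"
  shows "continuous_on S (\<lambda>x. gpt ci (fa x) cj (fb x))"
  unfolding gpt_def gz_def gX_def using assms by (intro continuous_intros) auto

lemma dscaled_cont:
  assumes "ci \<noteq> cj" "ri > 0" "rj > 0" "nu > 0" "cmod (cj - ci) / (ri + rj) \<le> nu"
  shows "continuous_on {nu..} (\<lambda>l. dpt (ci) (l * ri) (cj) (l * rj))"
proof -
  define D where "D = cmod (cj - ci)"
  have D: "D > 0" using assms(1) by (simp add: D_def)
  define mu where "mu l = (if ri = rj then l else min l (D / \<bar>ri - rj\<bar>))" for l
  have eq: "dpt ci (l * ri) cj (l * rj) = gpt ci (mu l * ri) cj (mu l * rj)" if l: "l \<in> {nu..}" for l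
  proof -
    have lp: "l > 0" using l assms(4) by simp
    have Dle: "D \<le> l * ri + l * rj"
    proof -
      have "D / (ri + rj) \<le> l" using assms(5) l by (simp add: D_def)
      then show ?thesis using assms(2,3) by (simp add: divide_le_eq distrib_left mult.commute)
    qed
    have ad: "\<bar>l * ri - l * rj\<bar> = l * \<bar>ri - rj\<bar>" using lp by (simp add: abs_mult right_diff_distrib[symmetric])
    show ?thesis
    proof (cases "l * \<bar>ri - rj\<bar> \<le> D")
      case True
      have "mu l = l"
      proof (cases "ri = rj")
        case False
        then have "l \<le> D / \<bar>ri - rj\<bar>" using True D by (simp add: le_divide_eq mult.commute)
        then show ?thesis by (simp add: mu_def)
      qed (simp add: mu_def)
      then show ?thesis using dpt_int[OF assms(1)] True Dle ad lp assms(2,3) D by (simp add: D_def)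
    next
      case False
      then have ne: "ri \<noteq> rj" using D by auto
      have lt: "D / \<bar>ri - rj\<bar> < l" using False ne by (simp add: divide_less_eq mult.commute)
      have "mu l = D / \<bar>ri - rj\<bar>" using lt ne by (simp add: mu_def)
      moreover have "dpt ci (l * ri) cj (l * rj) = gpt ci (D * (l * ri) / (l * \<bar>ri - rj\<bar>)) cj (D * (l * rj) / (l * \<bar>ri - rj\<bar>))"
        using dpt_nest[OF assms(1)] False ad lp assms(2,3) by (simp add: D_def)
      moreover have "D * (l * ri) / (l * \<bar>ri - rj\<bar>) = D / \<bar>ri - rj\<bar> * ri"
        "D * (l * rj) / (l * \<bar>ri - rj\<bar>) = D / \<bar>ri - rj\<bar> * rj" using lp by simp_all
      ultimately show ?thesis by simp
    qed
  qed
  have "continuous_on {nu..} mu"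
  proof (cases "ri = rj")
    case True
    then have "mu = (\<lambda>l. l)" by (simp add: mu_def fun_eq_iff)
    then show ?thesis by (simp add: continuous_on_id)
  next
    case False
    then have "mu = (\<lambda>l. min l (D / \<bar>ri - rj\<bar>))" by (simp add: mu_def fun_eq_iff)
    then show ?thesis by (simp add: continuous_on_id continuous_on_min continuous_on_const)
  qed
  then have "continuous_on {nu..} (\<lambda>l. gpt ci (mu l * ri) cj (mu l * rj))"
    using assms(1) by (intro gpt_cont continuous_intros)
  then show ?thesis by (rule continuous_on_eq) (rule eq[symmetric])
qed

lemma dscaled_same:
  assumes "ri \<noteq> rj" "l > 0"
  shows "dpt ci (l * ri) ci (l * rj) = ci"
proof -
  have "l * ri \<noteq> l * rj" using assms by simp
  then have e: "sphere ci (l * ri) \<inter> sphere ci (l * rj) = {}" by auto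
  have "(THE d. d \<in> sphere ci 0 \<inter> sphere ci 0) = ci" by (rule the_equality) auto
  then show ?thesis using e by (simp add: dpt_def Let_def)
qed


theorem mainTheorem6:
  fixes m :: nat and c :: "nat \<Rightarrow> complex" and r :: "nat \<Rightarrow> real"
  assumes "m \<ge> 3"
    and "\<And>i. i < m \<Longrightarrow> r i > 0"
    and "\<And>i j. i < m \<Longrightarrow> j < m \<Longrightarrow> i \<noteq> j \<Longrightarrow> cball (c i) (r i) \<noteq> cball (c j) (r j)"
    and "vr_scale m c r > 0"
  shows "(\<forall>i<m. \<forall>j<m. \<forall>k<m. i \<noteq> j \<and> k \<noteq> i \<and> k \<noteq> j \<longrightarrow>
            continuous_on {vr_scale m c r..} (Lam c r k i j))
         \<and> continuous_on {vr_scale m c r..} (rho_fun m c r)"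
proof -
  define nu where "nu = vr_scale m c r"
  have nu: "nu > 0" using assms(4) by (simp add: nu_def)
  define S where "S = {cmod (c i - c j) / (r i + r j) | i j. i < j \<and> j < m}"
  have fin: "finite S"
  proof (rule finite_subset)
    show "S \<subseteq> (\<lambda>(i,j). cmod (c i - c j) / (r i + r j)) ` ({..<m} \<times> {..<m})"
      unfolding S_def by auto
  qed auto
  have nuge: "cmod (c j - c i) / (r i + r j) \<le> nu" if "i < m" "j < m" "i \<noteq> j" for i j
  proof (cases "i < j")
    case True
    then have "cmod (c i - c j) / (r i + r j) \<in> S" using that unfolding S_def by blast
    then show ?thesis using fin by (simp add: nu_def vr_scale_def S_def[symmetric] norm_minus_commute)
  next
    case False
    then have "j < i" using that by simp
    then have "cmod (c j - c i) / (r j + r i) \<in> S" using that unfolding S_def by blast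
    then show ?thesis using fin by (simp add: nu_def vr_scale_def S_def[symmetric] add.commute)
  qed
  have L: "continuous_on {nu..} (Lam c r k i j)"
    if ij: "i < m" "j < m" "k < m" "i \<noteq> j" for i j k
  proof -
    have ri: "r i > 0" and rj: "r j > 0" using assms(2) ij by auto
    have e: "Lam c r k i j = (\<lambda>l. l * r k - cmod (dpt (c i) (l * r i) (c j) (l * r j) - c k))"
      by (simp add: fun_eq_iff Lam_def dpt_scaled_def)
    show ?thesis
    proof (cases "c i = c j")
      case True
      then have ne: "r i \<noteq> r j" using assms(3)[OF ij(1,2,4)] by auto
      have "continuous_on {nu..} (\<lambda>l. l * r k - cmod (c i - c k))"
        by (intro continuous_intros)
      moreover have "\<And>l. l \<in> {nu..} \<Longrightarrow> l * r k - cmod (c i - c k) = Lam c r k i j l"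
        using dscaled_same[OF ne] nu True by (simp add: e)
      ultimately show ?thesis by (rule continuous_on_eq)
    next
      case False
      have "continuous_on {nu..} (\<lambda>l. dpt (c i) (l * r i) (c j) (l * r j))"
        using dscaled_cont[OF False ri rj nu nuge[OF ij(1,2,4)]] .
      then show ?thesis unfolding e by (intro continuous_intros)
    qed
  qed
  define K where "K i j = {k. k < m \<and> k \<noteq> i \<and> k \<noteq> j}" for i j
  define P where "P = {(i, j). i < m \<and> j < m \<and> i \<noteq> j}"
  define f where "f p l = Min ((\<lambda>k. Lam c r k (fst p) (snd p) l) ` K (fst p) (snd p))" for p l
  have rho: "rho_fun m c r l = Max ((\<lambda>p. f p l) ` P)" for l
  proof -
    have "{Min {Lam c r k i j l | k. k < m \<and> k \<noteq> i \<and> k \<noteq> j} | i j. i < m \<and> j < m \<and> i \<noteq> j}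
        = (\<lambda>p. f p l) ` P"
      unfolding f_def P_def K_def by (auto simp: setcompr_eq_image image_iff) (metis fst_conv snd_conv)+
    then show ?thesis by (simp add: rho_fun_def)
  qed
  have Kne: "K i j \<noteq> {}" "finite (K i j)" for i j
  proof -
    have "{0,1,2} - {i,j} \<noteq> {}" by (cases "i = 0"; cases "j = 0"; cases "i = 1"; cases "j = 1"; auto)
    then obtain k where k: "k \<in> {0,1,2::nat}" "k \<noteq> i" "k \<noteq> j" by blast
    then have "k < m" using assms(1) by auto
    then have "k \<in> K i j" using k unfolding K_def by blast
    then show "K i j \<noteq> {}" by blast
    show "finite (K i j)" unfolding K_def by auto
  qed
  have Pne: "P \<noteq> {}" "finite P"
  proof -
    have "(0, 1) \<in> P" using assms(1) by (simp add: P_def)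
    then show "P \<noteq> {}" by blast
    show "finite P" by (rule finite_subset[of _ "{..<m} \<times> {..<m}"]) (auto simp: P_def)
  qed
  have fc: "continuous_on {nu..} (f p)" if "p \<in> P" for p
    unfolding f_def using that Kne L by (intro cont_Min) (auto simp: P_def K_def split: prod.splits)
  have "continuous_on {nu..} (\<lambda>l. Max ((\<lambda>p. f p l) ` P))"
    using Pne fc by (intro cont_Max) auto
  then have "continuous_on {nu..} (rho_fun m c r)" by (simp add: rho fun_eq_iff)
  then show ?thesis using L nu_def by auto
qed

end
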